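(* Let $\gamma\in\mathbb C$, $k\in\{1,\dots,n\}$, and $H_k(\gamma)=I-\gamma D^k$. Then $$K_h(H_k(\gamma))=\Bigl(\frac{|\gamma|\,n!}{(n-k)!}\Bigr)^{1/k}.$$
   Context: Let $n\ge1$ and $\mathcal P_n$ the complex vector space of polynomials in one complex variable of degree at most $n$; $D$ is differentiation and $I$ the identity on $\mathcal P_n$. For nonzero $f$, $Z(f)$ is the multiset of roots of $f$ (with multiplicity; empty for nonzero constants); $Z(0)=\mathbb C$. For finite nonempty $A,B\subset\mathbb C$, $d_h(A,B)=\max_{y\in B}\min_{x\in A}|x-y|$, with conventions $d_h(\emptyset,\emptyset)=0$, $d_h(A,\emptyset)=d_h(\emptyset,A)=+\infty$ for $A\ne\emptyset$, and $d_h(A,B)=0$ if one of $A,B$ equals $\mathbb C$ and the other is nonempty. $K_h(T)=\sup_{f\in\mathcal P_n}d_h(Z(f),Z(Tf))$. *)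

theory Defs
  imports "HOL-Computational_Algebra.Polynomial" "HOL-Library.Extended_Real"
begin

text \<open>Zero set of a polynomial (as a set; multiplicities do not affect the distance).
  Z(0) = the whole complex plane; nonzero constants have empty zero set.\<close>
definition Zset :: "complex poly \<Rightarrow> complex set" where
  "Zset f = (if f = 0 then UNIV else {z. poly f z = 0})"

definition d_h :: "complex set \<Rightarrow> complex set \<Rightarrow> ereal" where
  "d_h A B =
     (if A = {} \<and> B = {} then 0
      else if A = {} \<or> B = {} then \<infinity>
      else if A = UNIV \<or> B = UNIV then 0
      else ereal (Max ((\<lambda>y. Min ((\<lambda>x. cmod (x - y)) ` A)) ` B)))"

definition K_h :: "nat \<Rightarrow> (complex poly \<Rightarrow> complex poly) \<Rightarrow> ereal" where
  "K_h n T = (SUP f \<in> {f :: complex poly. degree f \<le> n}. d_h (Zset f) (Zset (T f)))"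

definition H :: "nat \<Rightarrow> complex \<Rightarrow> complex poly \<Rightarrow> complex poly" where
  "H k \<gamma> f = f - smult \<gamma> ((pderiv ^^ k) f)"

end

theory Submission
  imports Defs "HOL-Computational_Algebra.Fundamental_Theorem_Algebra"
begin

lemma coeff_prod_bound:
  fixes A :: "complex multiset" and r :: real
  assumes "\<forall>a\<in>#A. r \<le> cmod a" "0 \<le> r"
  shows "cmod (coeff (\<Prod>a\<in>#A. [:-a,1:]) i) * r^i \<le> of_nat (size A choose i) * cmod (coeff (\<Prod>a\<in>#A. [:-a,1:]) 0)"
  using assms(1)
proof (induction A arbitrary: i)
  case empty
  then show ?case by (cases i) auto
next
  case (add a A)
  define P where "P = (\<Prod>a\<in>#A. [:-a,1:])"
  have IH: "\<And>i. cmod (coeff P i) * r^i \<le> of_nat (size A choose i) * cmod (coeff P 0)"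
    using add by (simp add: P_def)
  have ra: "r \<le> cmod a" using add by simp
  have eq: "(\<Prod>a\<in>#add_mset a A. [:-a,1:]) = smult (-a) P + pCons 0 P"
    by (simp add: P_def mult_pCons_left)
  have c0: "coeff (smult (-a) P + pCons 0 P) 0 = - a * coeff P 0" by simp
  show ?case
  proof (cases i)
    case 0
    then show ?thesis by simp
  next
    case (Suc j)
    have "cmod (coeff (smult (-a) P + pCons 0 P) i) * r^i = cmod (- a * coeff P i + coeff P j) * r^i"
      using Suc by simp
    also have "\<dots> \<le> cmod a * (cmod (coeff P i) * r^i) + (cmod (coeff P j) * r^j) * r"
    proof -
      have "cmod (- a * coeff P i + coeff P j) \<le> cmod a * cmod (coeff P i) + cmod (coeff P j)"
        by (metis norm_minus_cancel norm_mult norm_triangle_ineq)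
      hence "cmod (- a * coeff P i + coeff P j) * r^i \<le> (cmod a * cmod (coeff P i) + cmod (coeff P j)) * r^i"
        using assms(2) by (intro mult_right_mono) auto
      thus ?thesis using Suc by (simp add: algebra_simps)
    qed
    also have "\<dots> \<le> cmod a * (of_nat (size A choose i) * cmod (coeff P 0)) + (of_nat (size A choose j) * cmod (coeff P 0)) * cmod a"
      by (intro add_mono mult_left_mono mult_mono IH ra) (auto simp: assms(2))
    also have "\<dots> = of_nat (size (add_mset a A) choose i) * cmod (coeff (smult (-a) P + pCons 0 P) 0)"
      using Suc by (simp add: c0 norm_mult algebra_simps)
    finally show ?thesis unfolding eq P_def .
  qed
qed

lemma higher_pderiv_shift:
  fixes f :: "complex poly"
  shows "(pderiv ^^ k) (pcompose f [:w,1:]) = pcompose ((pderiv ^^ k) f) [:w,1:]"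
  by (induction k) (simp_all add: pderiv_pcompose pderiv_pCons)

lemma key_bound:
  fixes f :: "complex poly" and r :: real
  assumes f0: "f \<noteq> 0" and eqw: "poly f w = \<gamma> * poly ((pderiv ^^ k) f) w"
    and r0: "0 \<le> r" and rle: "\<And>x. poly f x = 0 \<Longrightarrow> r \<le> cmod (x - w)"
    and fw: "poly f w \<noteq> 0"
  shows "r^k \<le> cmod \<gamma> * (of_nat (degree f choose k) * fact k)"
proof -
  define g where "g = pcompose f [:w,1:]"
  define D where "D = poly ((pderiv ^^ k) f) w"
  have D0: "D \<noteq> 0" using fw eqw by (auto simp: D_def)
  have dg: "degree g = degree f" by (simp add: g_def degree_pcompose)
  have g0: "g \<noteq> 0"
  proof
    assume "g = 0"
    hence "poly g 0 = 0" by simp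
    thus False using fw by (simp add: g_def poly_pcompose)
  qed
  define P where "P = (\<Prod>x\<in>#proots g. [:-x, 1:])"
  have gP: "g = smult (lead_coeff g) P" using complex_poly_decompose_multiset[of g] by (simp add: P_def)
  have sz: "size (proots g) = degree f" using size_proots_complex[of g] dg by simp
  have roots: "\<forall>a\<in>#proots g. r \<le> cmod a"
  proof
    fix a assume "a \<in># proots g"
    hence "poly g a = 0" using g0 by simp
    hence "poly f (w + a) = 0" by (simp add: g_def poly_pcompose)
    from rle[OF this] show "r \<le> cmod a" by simp
  qed
  have B: "cmod (coeff P k) * r^k \<le> of_nat (degree f choose k) * cmod (coeff P 0)"
    using coeff_prod_bound[OF roots r0, of k] sz by (simp add: P_def)
  have "cmod (coeff g k) * r^k \<le> of_nat (degree f choose k) * cmod (coeff g 0)"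
  proof -
    have "cmod (coeff g k) * r^k = cmod (lead_coeff g) * (cmod (coeff P k) * r^k)"
      by (subst gP) (simp add: norm_mult)
    also have "\<dots> \<le> cmod (lead_coeff g) * (of_nat (degree f choose k) * cmod (coeff P 0))"
      by (intro mult_left_mono B) auto
    also have "\<dots> = of_nat (degree f choose k) * cmod (coeff g 0)"
      by (subst (2) gP) (simp add: norm_mult)
    finally show ?thesis .
  qed
  moreover have "coeff g 0 = poly f w" by (simp add: g_def)
  moreover have "D = fact k * coeff g k"
  proof -
    have "D = coeff ((pderiv ^^ k) g) 0"
      by (simp add: D_def g_def higher_pderiv_shift)
    also have "\<dots> = fact k * coeff g k"
      by (simp add: coeff_higher_pderiv pochhammer_fact)
    finally show ?thesis .
  qed
  ultimately have "cmod (D / fact k) * r^k \<le> of_nat (degree f choose k) * (cmod \<gamma> * cmod D)"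
    using eqw by (simp add: D_def norm_mult)
  hence "cmod D * r^k \<le> cmod D * (cmod \<gamma> * (of_nat (degree f choose k) * fact k))"
    by (simp add: norm_divide field_simps)
  thus ?thesis using D0 by simp
qed

lemma H_coeff_top:
  assumes "1 \<le> k"
  shows "coeff (H k \<gamma> f) (degree f) = lead_coeff f"
  using assms by (simp add: H_def coeff_higher_pderiv coeff_eq_0)

lemma H_degree:
  fixes \<gamma> :: complex and f :: "complex poly"
  assumes "1 \<le> k" "f \<noteq> 0"
  shows "degree (H k \<gamma> f) = degree f" "H k \<gamma> f \<noteq> 0"
proof -
  have le: "degree (H k \<gamma> f) \<le> degree f"
    unfolding H_def
    by (rule order.trans[OF degree_diff_le_max]) (auto simp: degree_higher_pderiv intro: order.trans[OF degree_smult_le])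
  have c: "coeff (H k \<gamma> f) (degree f) \<noteq> 0" using H_coeff_top[OF assms(1)] assms(2) by simp
  show "degree (H k \<gamma> f) = degree f" using le le_degree[OF c] by simp
  show "H k \<gamma> f \<noteq> 0" using c by auto
qed

lemma no_roots_deg0:
  fixes p :: "complex poly"
  assumes "p \<noteq> 0" "degree p = 0"
  shows "{z. poly p z = 0} = {}"
  using assms by (auto elim!: degree_eq_zeroE)

lemma has_root:
  fixes p :: "complex poly"
  assumes "degree p \<noteq> 0"
  shows "{z. poly p z = 0} \<noteq> {}"
  using fundamental_theorem_of_algebra[of p] constant_degree[of p] assms by auto

lemma dh_form:
  fixes \<gamma> :: complex and f :: "complex poly"
  assumes k1: "1 \<le> k" and f0: "f \<noteq> 0" and df: "degree f \<noteq> 0"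
  shows "d_h (Zset f) (Zset (H k \<gamma> f)) =
     ereal (Max ((\<lambda>y. Min ((\<lambda>x. cmod (x - y)) ` {z. poly f z = 0})) ` {z. poly (H k \<gamma> f) z = 0}))"
    "{z. poly (H k \<gamma> f) z = 0} \<noteq> {}"
    "finite {z. poly (H k \<gamma> f) z = 0}"
proof -
  note hd = H_degree[OF k1 f0, of \<gamma>]
  have A1: "{z. poly f z = 0} \<noteq> {}" using has_root df by blast
  show B1: "{z. poly (H k \<gamma> f) z = 0} \<noteq> {}" using has_root df hd by metis
  have A2: "finite {z. poly f z = 0}" using poly_roots_finite f0 by blast
  show B2: "finite {z. poly (H k \<gamma> f) z = 0}" using poly_roots_finite hd by blast
  have "{z. poly f z = 0} \<noteq> UNIV" "{z. poly (H k \<gamma> f) z = 0} \<noteq> UNIV"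
    using A2 B2 infinite_UNIV_char_0[where 'a=complex] by metis+
  thus "d_h (Zset f) (Zset (H k \<gamma> f)) =
     ereal (Max ((\<lambda>y. Min ((\<lambda>x. cmod (x - y)) ` {z. poly f z = 0})) ` {z. poly (H k \<gamma> f) z = 0}))"
    using A1 B1 f0 hd unfolding d_h_def Zset_def by auto
qed

lemma dh_upper:
  fixes f :: "complex poly"
  assumes k1: "1 \<le> k" and kn: "k \<le> n" and fn: "degree f \<le> n"
  shows "d_h (Zset f) (Zset (H k \<gamma> f)) \<le> ereal (root k (cmod \<gamma> * fact n / fact (n - k)))"
proof -
  define R where "R = root k (cmod \<gamma> * fact n / fact (n - k))"
  have R0: "0 \<le> R" unfolding R_def by (intro real_root_ge_zero) auto
  show ?thesis
  proof (cases "f = 0")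
    case True
    hence "H k \<gamma> f = 0" by (simp add: H_def)
    then show ?thesis using True R0 by (simp add: d_h_def Zset_def R_def)
  next
    case f0: False
    note hd = H_degree[OF k1 f0, of \<gamma>]
    show ?thesis
    proof (cases "degree f = 0")
      case True
      then show ?thesis using f0 hd no_roots_deg0[OF f0 True] no_roots_deg0[of "H k \<gamma> f"] R0
        unfolding R_def by (simp add: d_h_def Zset_def)
    next
      case df: False
      note F = dh_form[OF k1 f0 df, of \<gamma>] has_root[OF df] poly_roots_finite[OF f0]
      have "Max ((\<lambda>y. Min ((\<lambda>x. cmod (x - y)) ` {z. poly f z = 0})) ` {z. poly (H k \<gamma> f) z = 0}) \<le> R"
      proof (subst Max_le_iff, goal_cases)
        case 1 show ?case using F by simp
      next
        case 2 show ?case using F by simp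
      next
        case 3
        show ?case
        proof clarify
          fix y assume hy: "poly (H k \<gamma> f) y = 0"
          define m where "m = Min ((\<lambda>x. cmod (x - y)) ` {z. poly f z = 0})"
          have mle: "\<And>x. poly f x = 0 \<Longrightarrow> m \<le> cmod (x - y)"
            unfolding m_def using F by (intro Min_le) auto
          have m0: "0 \<le> m" unfolding m_def using F by (subst Min_ge_iff) auto
          show "m \<le> R"
          proof (cases "poly f y = 0")
            case True
            then show ?thesis using mle[OF True] R0 by simp
          next
            case False
            have eqw: "poly f y = \<gamma> * poly ((pderiv ^^ k) f) y"
              using hy by (simp add: H_def)
            have "m^k \<le> cmod \<gamma> * (of_nat (degree f choose k) * fact k)"
              by (rule key_bound[OF f0 eqw m0 mle False])
            also have "\<dots> \<le> cmod \<gamma> * (of_nat (n choose k) * fact k)"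
              using fn by (intro mult_left_mono mult_right_mono) (auto simp: binomial_right_mono)
            also have "\<dots> = cmod \<gamma> * fact n / fact (n - k)"
              using kn by (simp add: binomial_fact)
            finally have "m^k \<le> cmod \<gamma> * fact n / fact (n - k)" .
            hence "root k (m^k) \<le> R" unfolding R_def using k1 by simp
            thus ?thesis using real_root_power_cancel[of k m] k1 m0 by simp
          qed
        qed
      qed
      thus ?thesis using F(1) by (simp add: R_def)
    qed
  qed
qed

lemma higher_pderiv_monom1:
  assumes "k \<le> n"
  shows "(pderiv ^^ k) (monom (1::complex) n) = monom (fact n / fact (n - k)) (n - k)"
proof (rule poly_eqI)
  fix i
  have pf: "(fact n :: complex) = fact (n - k) * pochhammer (of_nat (n - k) + 1) k"
    using pochhammer_product[of "n - k" n "1::complex"] assms by (simp add: pochhammer_fact add.commute)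
  have pf2: "pochhammer (of_nat (Suc (n - k))) k = (fact n / fact (n - k) :: complex)"
    using pf by (simp add: field_simps add.commute del: of_nat_diff)
  show "coeff ((pderiv ^^ k) (monom (1::complex) n)) i = coeff (monom (fact n / fact (n - k)) (n - k)) i"
  proof (cases "i = n - k")
    case True
    have "coeff ((pderiv ^^ k) (monom (1::complex) n)) i = pochhammer (of_nat (Suc (n-k))) k * coeff (monom (1::complex) n) (n - k + k)"
      by (simp only: coeff_higher_pderiv True)
    then show ?thesis using assms pf2 True by (simp del: of_nat_diff)
  next
    case False
    then show ?thesis using assms by (auto simp: coeff_higher_pderiv)
  qed
qed

theorem mainTheorem16:
  fixes n k :: nat and \<gamma> :: complex
  assumes "1 \<le> n" and "1 \<le> k" and "k \<le> n"
  shows "K_h n (H k \<gamma>) = ereal (root k (cmod \<gamma> * fact n / fact (n - k)))"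
proof (rule antisym)
  show "K_h n (H k \<gamma>) \<le> ereal (root k (cmod \<gamma> * fact n / fact (n - k)))"
    unfolding K_h_def using assms by (intro SUP_least dh_upper) auto
next
  define R where "R = root k (cmod \<gamma> * fact n / fact (n - k))"
  define c :: complex where "c = \<gamma> * fact n / fact (n - k)"
  define w where "w = rcis (root k (cmod c)) (Arg c / real k)"
  have k0: "0 < k" using assms by simp
  have wk: "w ^ k = c"
    using k0 by (simp add: w_def DeMoivre2 rcis_cmod_Arg)
  have cw: "cmod w = R"
    by (simp add: w_def R_def c_def norm_mult norm_divide real_root_ge_zero)
  define f where "f = monom (1::complex) n"
  have f0: "f \<noteq> 0" and df: "degree f = n" by (auto simp: f_def degree_monom_eq)
  have df0: "degree f \<noteq> 0" using df assms by simp
  note F = dh_form[OF assms(2) f0 df0, of \<gamma>] has_root[OF df0] poly_roots_finite[OF f0]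
  have Hf: "poly (H k \<gamma> f) w = w ^ (n - k) * (w ^ k - c)"
    using assms by (simp add: H_def f_def higher_pderiv_monom1 poly_monom c_def algebra_simps
        flip: power_add)
  have wB: "poly (H k \<gamma> f) w = 0" using Hf wk by simp
  have A: "{z. poly f z = 0} = {0}" using assms by (auto simp: f_def poly_monom)
  have "ereal R \<le> d_h (Zset f) (Zset (H k \<gamma> f))"
    unfolding F(1) A using F wB cw by (auto intro!: Max_ge_iff[THEN iffD2])
  also have "\<dots> \<le> K_h n (H k \<gamma>)"
    unfolding K_h_def by (rule SUP_upper) (simp add: df)
  finally show "ereal (root k (cmod \<gamma> * fact n / fact (n - k))) \<le> K_h n (H k \<gamma>)"
    by (simp add: R_def)
qed

end
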